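(* With the conventions $g(0)=h(0)=g_1(0)=h_1(0)=0$, for all $M\geq 2$: $$g(M)=g(M-1)+g(M-2)+F_{M-1},\qquad h(M)=h(M-1)+h(M-2)+F_{M-2},$$ $$g_1(M)=g_1(M-1)+g_1(M-2)+F_{M-1},\qquad h_1(M)=h_1(M-1)+h_1(M-2)+F_{M-1}.$$
   Context: $F_k$ denotes the Fibonacci numbers with $F_{-1}=1$, $F_0=0$, $F_1=1$, $F_k=F_{k-1}+F_{k-2}$. The perimeter of a nonempty partition $\lambda$ with largest part $\lambda_1$ and $\ell(\lambda)$ parts is $\lambda_1+\ell(\lambda)-1$. $\mathcal G(M)$ is the set of partitions into odd parts with perimeter $M$, $\mathcal H(M)$ the set of partitions into distinct parts with perimeter $M$; $g(M)$ (resp. $h(M)$) is the total number of parts, summed over all partitions in $\mathcal G(M)$ (resp. $\mathcal H(M)$). $\mathcal G_1(M)$ is the set of partitions with perimeter $M$ in which exactly one distinct even integer occurs as a part (possibly with multiplicity greater than one) and all other parts are odd; $\mathcal H_1(M)$ is the set of partitions with perimeter $M$ in which exactly one part value occurs at least twice and every other part value occurs exactly once. $g_1(M)=|\mathcal G_1(M)|$, $h_1(M)=|\mathcal H_1(M)|$. *)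

theory Defs
  imports Main "HOL-Library.Multiset" "HOL-Number_Theory.Fib"
begin

definition perimeter :: "nat multiset \<Rightarrow> nat" where
  "perimeter p = Max (set_mset p) + size p - 1"

definition is_partition :: "nat multiset \<Rightarrow> bool" where
  "is_partition p \<longleftrightarrow> (\<forall>x\<in>#p. 0 < x)"

definition GG :: "nat \<Rightarrow> nat multiset set" where
  "GG M = {p. p \<noteq> {#} \<and> is_partition p \<and> (\<forall>x\<in>#p. odd x) \<and> perimeter p = M}"

definition HH :: "nat \<Rightarrow> nat multiset set" where
  "HH M = {p. p \<noteq> {#} \<and> is_partition p \<and> (\<forall>x. count p x \<le> 1) \<and> perimeter p = M}"

definition GG1 :: "nat \<Rightarrow> nat multiset set" where
  "GG1 M = {p. p \<noteq> {#} \<and> is_partition p \<and> card {x \<in> set_mset p. even x} = 1 \<and> perimeter p = M}"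

definition HH1 :: "nat \<Rightarrow> nat multiset set" where
  "HH1 M = {p. p \<noteq> {#} \<and> is_partition p \<and> card {x \<in> set_mset p. 2 \<le> count p x} = 1 \<and> perimeter p = M}"

definition g :: "nat \<Rightarrow> nat" where "g M = (\<Sum>p\<in>GG M. size p)"
definition h :: "nat \<Rightarrow> nat" where "h M = (\<Sum>p\<in>HH M. size p)"
definition g1 :: "nat \<Rightarrow> nat" where "g1 M = card (GG1 M)"
definition h1 :: "nat \<Rightarrow> nat" where "h1 M = card (HH1 M)"

end

theory Submission
  imports Defs
begin

definition mx :: "nat multiset \<Rightarrow> nat" where "mx p = Max (set_mset p)"

lemma mx_in: "p \<noteq> {#} \<Longrightarrow> mx p \<in># p"
  unfolding mx_def by (simp add: Max_in)

lemma mx_ge: "x \<in># p \<Longrightarrow> x \<le> mx p"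
  unfolding mx_def by simp

lemma mx_eq: "m \<in># p \<Longrightarrow> (\<And>x. x \<in># p \<Longrightarrow> x \<le> m) \<Longrightarrow> mx p = m"
  unfolding mx_def by (intro Max_eqI) auto

lemma per: "perimeter p = mx p + size p - 1"
  unfolding perimeter_def mx_def by simp

lemma finite_per: "finite {p. p \<noteq> {#} \<and> perimeter p = M}"
proof -
  have "{p. p \<noteq> {#} \<and> perimeter p = M} \<subseteq> (\<Union>n\<in>{..Suc M}. multisets_of_size {..M} n)"
  proof
    fix p assume "p \<in> {p. p \<noteq> {#} \<and> perimeter p = M}"
    then have ne: "p \<noteq> {#}" and pm: "mx p + size p - 1 = M" by (auto simp: per)
    have "size p \<ge> 1" using ne by (cases p) auto
    then have "\<forall>x\<in>#p. x \<le> M" using pm mx_ge by fastforce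
    then show "p \<in> (\<Union>n\<in>{..Suc M}. multisets_of_size {..M} n)"
      using pm `size p \<ge> 1` by (auto simp: multisets_of_size_def)
  qed
  moreover have "finite (\<Union>n\<in>{..Suc M}. multisets_of_size {..M} n)" by auto
  ultimately show ?thesis by (rule finite_subset)
qed

lemma finite_sub: "S \<subseteq> {p. p \<noteq> {#} \<and> perimeter p = M} \<Longrightarrow> finite S"
  using finite_per finite_subset by blast

lemma finite_GG: "finite (GG M)" by (rule finite_sub[of _ M]) (auto simp: GG_def)
lemma finite_HH: "finite (HH M)" by (rule finite_sub[of _ M]) (auto simp: HH_def)
lemma finite_GG1: "finite (GG1 M)" by (rule finite_sub[of _ M]) (auto simp: GG1_def)
lemma finite_HH1: "finite (HH1 M)" by (rule finite_sub[of _ M]) (auto simp: HH1_def)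

lemma mx_add: "(\<And>x. x \<in># q \<Longrightarrow> x \<le> m) \<Longrightarrow> mx (add_mset m q) = m"
  by (rule mx_eq) auto

lemma decomp: "p \<noteq> {#} \<Longrightarrow> add_mset (mx p) (p - {#mx p#}) = p"
  by (simp add: mx_in)

lemma rest_le: "x \<in># p - {#mx p#} \<Longrightarrow> x \<le> mx p"
  by (meson in_diffD mx_ge)

lemma rest_lt: "count p (mx p) = 1 \<Longrightarrow> x \<in># p - {#mx p#} \<Longrightarrow> x < mx p"
proof -
  assume a: "count p (mx p) = 1" "x \<in># p - {#mx p#}"
  have "x \<noteq> mx p" using a by (auto simp: in_diff_count)
  then show ?thesis using rest_le[OF a(2)] by simp
qed

lemma in_rest2: "2 \<le> count p a \<Longrightarrow> a \<in># p - {#a#}"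
  by (simp add: in_diff_count)

lemma GG_b1: "bij_betw (\<lambda>q. add_mset (mx q) q) (GG (Suc n)) {p\<in>GG (Suc (Suc n)). count p (mx p) \<ge> 2}"
proof (rule bij_betw_byWitness[where f'="\<lambda>p. p - {#mx p#}"])
  show "\<forall>a\<in>GG (Suc n). add_mset (mx a) a - {#mx (add_mset (mx a) a)#} = a"
    by (auto simp: mx_add mx_ge)
  show "\<forall>a'\<in>{p \<in> GG (Suc (Suc n)). 2 \<le> count p (mx p)}. add_mset (mx (a' - {#mx a'#})) (a' - {#mx a'#}) = a'"
  proof
    fix p assume p: "p \<in> {p \<in> GG (Suc (Suc n)). 2 \<le> count p (mx p)}"
    then have "mx (p - {#mx p#}) = mx p"
      by (intro mx_eq) (auto simp: rest_le in_rest2)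
    then show "add_mset (mx (p - {#mx p#})) (p - {#mx p#}) = p" using p by (auto simp: GG_def decomp)
  qed
  show "(\<lambda>q. add_mset (mx q) q) ` GG (Suc n) \<subseteq> {p \<in> GG (Suc (Suc n)). 2 \<le> count p (mx p)}"
    by (auto simp: GG_def mx_add mx_ge per is_partition_def mx_in)
  show "(\<lambda>p. p - {#mx p#}) ` {p \<in> GG (Suc (Suc n)). 2 \<le> count p (mx p)} \<subseteq> GG (Suc n)"
  proof clarify
    fix p assume p: "p \<in> GG (Suc (Suc n))" "2 \<le> count p (mx p)"
    then have m: "mx (p - {#mx p#}) = mx p"
      by (intro mx_eq) (auto simp: rest_le in_rest2)
    have "p - {#mx p#} \<noteq> {#}" using p(2)
      using in_rest2[of p "mx p"] by auto
    moreover have "size p > 0" using p by (auto simp: GG_def nonempty_has_size)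
    ultimately show "p - {#mx p#} \<in> GG (Suc n)" using p m
      by (auto simp: GG_def per is_partition_def size_Diff_singleton mx_in dest: in_diffD)
  qed
qed

definition A :: "nat multiset \<Rightarrow> nat multiset" where "A q = add_mset (mx q) q"
definition R :: "nat multiset \<Rightarrow> nat multiset" where "R p = p - {#mx p#}"
definition B :: "nat \<Rightarrow> nat multiset \<Rightarrow> nat multiset" where "B k q = add_mset (mx q + k) (q - {#mx q#})"
definition Bi :: "nat \<Rightarrow> nat multiset \<Rightarrow> nat multiset" where "Bi k p = add_mset (mx p - k) (p - {#mx p#})"
definition C :: "nat multiset \<Rightarrow> nat multiset" where "C q = add_mset (mx q + 1) q"

lemma per': "p \<noteq> {#} \<Longrightarrow> perimeter p + 1 = mx p + size p"
  unfolding per by (cases p) auto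

lemma A_mx: "q \<noteq> {#} \<Longrightarrow> mx (A q) = mx q"
  unfolding A_def by (auto simp: mx_add mx_ge)
lemma A_R: "q \<noteq> {#} \<Longrightarrow> R (A q) = q"
  by (simp add: A_mx R_def) (simp add: A_def)
lemma A_ne: "A q \<noteq> {#}" by (simp add: A_def)
lemma A_size: "size (A q) = size q + 1" by (simp add: A_def)
lemma A_count: "q \<noteq> {#} \<Longrightarrow> count (A q) (mx (A q)) = count q (mx q) + 1"
  by (simp add: A_mx) (simp add: A_def)
lemma A_set: "q \<noteq> {#} \<Longrightarrow> set_mset (A q) = set_mset q"
  by (auto simp: A_def mx_in)
lemma A_per: "q \<noteq> {#} \<Longrightarrow> perimeter (A q) = perimeter q + 1"
  using per'[of q] per'[of "A q"] A_ne[of q] by (simp add: A_mx A_size)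

lemma R_mx: "2 \<le> count p (mx p) \<Longrightarrow> mx (R p) = mx p"
  unfolding R_def by (intro mx_eq) (auto simp: rest_le in_rest2)
lemma R_ne2: "2 \<le> count p (mx p) \<Longrightarrow> R p \<noteq> {#}"
  unfolding R_def using in_rest2 by fastforce
lemma R_A: "2 \<le> count p (mx p) \<Longrightarrow> A (R p) = p"
proof -
  assume a: "2 \<le> count p (mx p)"
  then have ne: "p \<noteq> {#}" by auto
  show ?thesis using decomp[OF ne] R_mx[OF a] by (simp add: A_def R_def)
qed
lemma R_count: "2 \<le> count p (mx p) \<Longrightarrow> count (R p) (mx (R p)) + 1 = count p (mx p)"
  by (simp add: R_mx) (simp add: R_def)
lemma R_size: "p \<noteq> {#} \<Longrightarrow> size (R p) + 1 = size p"
  unfolding R_def using mx_in[of p] by (simp add: size_Diff_singleton) (cases p, auto)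
lemma R_sub: "x \<in># R p \<Longrightarrow> x \<in># p"
  unfolding R_def by (rule in_diffD)

lemma B_mx: "q \<noteq> {#} \<Longrightarrow> mx (B k q) = mx q + k"
  unfolding B_def by (rule mx_add) (meson rest_le trans_le_add1)
lemma B_ne: "B k q \<noteq> {#}" by (simp add: B_def)
lemma B_size: "q \<noteq> {#} \<Longrightarrow> size (B k q) = size q"
  unfolding B_def using mx_in[of q] by (simp add: size_Diff_singleton) (cases q, auto)
lemma B_count: "q \<noteq> {#} \<Longrightarrow> 0 < k \<Longrightarrow> count (B k q) (mx (B k q)) = 1"
proof -
  assume q: "q \<noteq> {#}" "0 < k"
  have "mx q + k \<notin># q - {#mx q#}" using rest_le[of "mx q + k" q] q(2) by auto
  then have "count (B k q) (mx q + k) = 1" by (simp add: B_def not_in_iff)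
  then show ?thesis using q by (simp add: B_mx)
qed
lemma B_Bi: "q \<noteq> {#} \<Longrightarrow> Bi k (B k q) = q"
  by (simp add: B_mx Bi_def) (simp add: B_def decomp)
lemma B_per: "q \<noteq> {#} \<Longrightarrow> perimeter (B k q) = perimeter q + k"
  using per'[of q] per'[of "B k q"] B_ne[of k q] by (simp add: B_mx B_size)
lemma B_mem: "q \<noteq> {#} \<Longrightarrow> x \<in># B k q \<longleftrightarrow> x = mx q + k \<or> x \<in># q - {#mx q#}"
  by (simp add: B_def)

lemma Bi_mx: "count p (mx p) = 1 \<Longrightarrow> (\<And>x. x \<in># p - {#mx p#} \<Longrightarrow> x \<le> mx p - k) \<Longrightarrow> mx (Bi k p) = mx p - k"
  unfolding Bi_def by (rule mx_add) auto
lemma Bi_B: "count p (mx p) = 1 \<Longrightarrow> (\<And>x. x \<in># p - {#mx p#} \<Longrightarrow> x \<le> mx p - k) \<Longrightarrow> k \<le> mx p \<Longrightarrow> B k (Bi k p) = p"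
proof -
  assume a: "count p (mx p) = 1" "\<And>x. x \<in># p - {#mx p#} \<Longrightarrow> x \<le> mx p - k" "k \<le> mx p"
  have ne: "p \<noteq> {#}" using a(1) by auto
  have m: "mx (Bi k p) = mx p - k" using Bi_mx[of p k] a by blast
  have "B k (Bi k p) = add_mset (mx p - k + k) (Bi k p - {#mx p - k#})" by (simp add: B_def m)
  also have "Bi k p - {#mx p - k#} = p - {#mx p#}" by (simp add: Bi_def)
  also have "mx p - k + k = mx p" using a(3) by simp
  finally show ?thesis using decomp[OF ne] by simp
qed
lemma Bi_ne: "Bi k p \<noteq> {#}" by (simp add: Bi_def)
lemma Bi_size: "p \<noteq> {#} \<Longrightarrow> size (Bi k p) = size p"
  unfolding Bi_def using mx_in[of p] by (simp add: size_Diff_singleton) (cases p, auto)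
lemma Bi_mem: "x \<in># Bi k p \<longleftrightarrow> x = mx p - k \<or> x \<in># p - {#mx p#}"
  by (simp add: Bi_def)

lemma C_mx: "q \<noteq> {#} \<Longrightarrow> mx (C q) = mx q + 1"
  unfolding C_def by (rule mx_add, drule mx_ge, simp)
lemma C_ne: "C q \<noteq> {#}" by (simp add: C_def)
lemma C_R: "q \<noteq> {#} \<Longrightarrow> R (C q) = q"
  by (simp add: C_mx R_def) (simp add: C_def)
lemma C_size: "size (C q) = size q + 1" by (simp add: C_def)
lemma C_per: "q \<noteq> {#} \<Longrightarrow> perimeter (C q) = perimeter q + 2"
  using per'[of q] per'[of "C q"] C_ne[of q] by (simp add: C_mx C_size)
lemma C_count: "q \<noteq> {#} \<Longrightarrow> count (C q) (mx (C q)) = 1"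
proof -
  assume q: "q \<noteq> {#}"
  have "mx q + 1 \<notin># q" using mx_ge[of "mx q + 1" q] by auto
  then have "count (C q) (mx q + 1) = 1" by (simp add: C_def not_in_iff)
  then show ?thesis using q by (simp add: C_mx)
qed
lemma C_mem: "x \<in># C q \<longleftrightarrow> x = mx q + 1 \<or> x \<in># q"
  by (simp add: C_def)

lemma R_mx1: "count p (mx p) = 1 \<Longrightarrow> mx p - 1 \<in># p \<Longrightarrow> 0 < mx p \<Longrightarrow> mx (R p) = mx p - 1"
proof -
  assume a: "count p (mx p) = 1" "mx p - 1 \<in># p" "0 < mx p"
  show ?thesis unfolding R_def
  proof (rule mx_eq)
    show "mx p - 1 \<in># p - {#mx p#}" using a by (simp add: in_diff_count)
    fix x assume "x \<in># p - {#mx p#}"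
    then have "x < mx p" using rest_lt a(1) by blast
    then show "x \<le> mx p - 1" by simp
  qed
qed
lemma R_C: "count p (mx p) = 1 \<Longrightarrow> mx p - 1 \<in># p \<Longrightarrow> 0 < mx p \<Longrightarrow> C (R p) = p"
proof -
  assume a: "count p (mx p) = 1" "mx p - 1 \<in># p" "0 < mx p"
  have ne: "p \<noteq> {#}" using a(2) by auto
  have "mx p - 1 + 1 = mx p" using a(3) by simp
  then show ?thesis using R_mx1[OF a] decomp[OF ne] by (simp add: C_def R_def)
qed
lemma R_ne1: "count p (mx p) = 1 \<Longrightarrow> mx p - 1 \<in># p \<Longrightarrow> 0 < mx p \<Longrightarrow> R p \<noteq> {#}"
proof -
  assume a: "count p (mx p) = 1" "mx p - 1 \<in># p" "0 < mx p"
  have "mx p - 1 \<in># R p" using a by (simp add: R_def in_diff_count)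
  then show ?thesis by auto
qed

lemma per_eq: "p \<noteq> {#} \<Longrightarrow> perimeter p = n \<longleftrightarrow> mx p + size p = n + 1"
  using per'[of p] by auto

lemma one_mx: "p \<noteq> {#} \<Longrightarrow> count p (mx p) = 1 \<Longrightarrow> is_partition p \<Longrightarrow> mx p = 1 \<Longrightarrow> size p = 1"
proof -
  assume a: "p \<noteq> {#}" "count p (mx p) = 1" "is_partition p" "mx p = 1"
  have "R p = {#}"
  proof (rule ccontr)
    assume "R p \<noteq> {#}"
    then obtain x where x: "x \<in># R p" by blast
    then have "x < 1" using rest_lt[of p x] a by (simp add: R_def)
    moreover have "0 < x" using x a(3) R_sub[OF x] by (auto simp: is_partition_def)
    ultimately show False by simp
  qed
  then show ?thesis using R_size[OF a(1)] by simp
qed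

lemma all_B: "P (mx q + k) \<Longrightarrow> (\<forall>x\<in>#q. P x) \<Longrightarrow> \<forall>x\<in>#B k q. P x"
  unfolding B_def by (auto dest: in_diffD)
lemma all_Bi: "P (mx p - k) \<Longrightarrow> (\<forall>x\<in>#p. P x) \<Longrightarrow> \<forall>x\<in>#Bi k p. P x"
  unfolding Bi_def by (auto dest: in_diffD)
lemma all_C: "P (mx q + 1) \<Longrightarrow> (\<forall>x\<in>#q. P x) \<Longrightarrow> \<forall>x\<in>#C q. P x"
  unfolding C_def by auto
lemma all_R: "(\<forall>x\<in>#p. P x) \<Longrightarrow> \<forall>x\<in>#R p. P x"
  unfolding R_def by (auto dest: in_diffD)
lemma all_A: "q \<noteq> {#} \<Longrightarrow> (\<forall>x\<in>#q. P x) \<Longrightarrow> \<forall>x\<in>#A q. P x"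
  unfolding A_def using mx_in by auto

lemma GG_b2: "bij_betw (B 2) (GG n) {p\<in>GG (Suc (Suc n)). count p (mx p) = 1}"
proof (rule bij_betw_byWitness[where f'="Bi 2"])
  show "\<forall>a\<in>GG n. Bi 2 (B 2 a) = a" by (auto simp: GG_def B_Bi)
  show "B 2 ` GG n \<subseteq> {p \<in> GG (Suc (Suc n)). count p (mx p) = 1}"
  proof (rule image_subsetI, rule CollectI, rule conjI)
    fix q assume q: "q \<in> GG n"
    then have ne: "q \<noteq> {#}" and od: "odd (mx q)" and pos: "0 < mx q"
      using mx_in[of q] by (auto simp: GG_def is_partition_def)
    have "\<forall>x\<in>#B 2 q. 0 < x \<and> odd x" using q od by (intro all_B) (auto simp: GG_def is_partition_def)
    then show "B 2 q \<in> GG (Suc (Suc n))" using q ne B_ne[of 2 q] B_per[OF ne, of 2]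
      by (simp add: GG_def is_partition_def)
    show "count (B 2 q) (mx (B 2 q)) = 1" using B_count[OF ne] by simp
  qed
  have key: "p \<in> GG (Suc (Suc n)) \<Longrightarrow> count p (mx p) = 1 \<Longrightarrow>
     3 \<le> mx p \<and> (\<forall>x. x \<in># p - {#mx p#} \<longrightarrow> x \<le> mx p - 2)" for p
  proof -
    assume p: "p \<in> GG (Suc (Suc n))" "count p (mx p) = 1"
    then have ne: "p \<noteq> {#}" and od: "odd (mx p)" and pos: "0 < mx p" and ip: "is_partition p"
      and pp: "mx p + size p = n + 3"
      using mx_in[of p] by (auto simp: GG_def is_partition_def per_eq)
    have "mx p \<noteq> 1" using one_mx[OF ne p(2) ip] pp by auto
    then have "3 \<le> mx p" using od pos by presburger
    moreover have "x \<le> mx p - 2" if "x \<in># p - {#mx p#}" for x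
    proof -
      have "x < mx p" using rest_lt[OF p(2) that] .
      moreover have "odd x" using p in_diffD[OF that] by (auto simp: GG_def)
      ultimately show ?thesis using od by presburger
    qed
    ultimately show ?thesis by blast
  qed
  show "\<forall>a'\<in>{p \<in> GG (Suc (Suc n)). count p (mx p) = 1}. B 2 (Bi 2 a') = a'"
  proof
    fix p assume "p \<in> {p \<in> GG (Suc (Suc n)). count p (mx p) = 1}"
    then have p: "p \<in> GG (Suc (Suc n))" "count p (mx p) = 1" by auto
    from key[OF p] have k: "3 \<le> mx p" "\<And>x. x \<in># p - {#mx p#} \<Longrightarrow> x \<le> mx p - 2" by auto
    have "2 \<le> mx p" using k(1) by linarith
    then show "B 2 (Bi 2 p) = p" using Bi_B[of p 2] p(2) k(2) by blast
  qed
  show "Bi 2 ` {p \<in> GG (Suc (Suc n)). count p (mx p) = 1} \<subseteq> GG n"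
  proof clarify
    fix p assume p: "p \<in> GG (Suc (Suc n))" "count p (mx p) = 1"
    from key[OF p] have k: "3 \<le> mx p" "\<And>x. x \<in># p - {#mx p#} \<Longrightarrow> x \<le> mx p - 2" by auto
    have ne: "p \<noteq> {#}" using p by (simp add: GG_def)
    have od: "odd (mx p)" using p mx_in[OF ne] by (simp add: GG_def)
    have pp: "mx p + size p = n + 3" using p per_eq[OF ne] by (simp add: GG_def)
    have m: "mx (Bi 2 p) = mx p - 2" using Bi_mx[OF p(2) k(2)] .
    have s: "size (Bi 2 p) = size p" using Bi_size[OF ne] .
    have r: "\<forall>x\<in># p - {#mx p#}. 0 < x \<and> odd x" using p
      by (auto simp: GG_def is_partition_def dest!: in_diffD)
    have t: "0 < mx p - 2 \<and> odd (mx p - 2)" using k(1) od by presburger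
    have e: "\<forall>x\<in># Bi 2 p. 0 < x \<and> odd x"
    proof
      fix x assume "x \<in># Bi 2 p"
      then have "x = mx p - 2 \<or> x \<in># p - {#mx p#}" by (simp only: Bi_mem)
      then show "0 < x \<and> odd x" using r t by blast
    qed
    have "perimeter (Bi 2 p) = n" using per_eq[OF Bi_ne[of 2 p]] m s pp k(1) by simp
    then show "Bi 2 p \<in> GG n" using e Bi_ne[of 2 p] by (simp add: GG_def is_partition_def)
  qed
qed

lemma A_eq: "A = (\<lambda>q. add_mset (mx q) q)" by (rule ext) (simp add: A_def)

lemma split_card: assumes "finite S" "\<And>p. p \<in> S \<Longrightarrow> p \<noteq> {#}"
  shows "card S = card {p\<in>S. 2 \<le> count p (mx p)} + card {p\<in>S. count p (mx p) = 1}"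
    and "sum f S = sum f {p\<in>S. 2 \<le> count p (mx p)} + sum f {p\<in>S. count p (mx p) = 1}"
proof -
  have e: "S = {p\<in>S. 2 \<le> count p (mx p)} \<union> {p\<in>S. count p (mx p) = 1}"
  proof -
    have "2 \<le> count p (mx p) \<or> count p (mx p) = 1" if "p \<in> S" for p
    proof -
      have "0 < count p (mx p)" using assms(2)[OF that] mx_in by auto
      then show ?thesis by linarith
    qed
    then show ?thesis by blast
  qed
  have d: "{p\<in>S. 2 \<le> count p (mx p)} \<inter> {p\<in>S. count p (mx p) = 1} = {}" by auto
  show "card S = card {p\<in>S. 2 \<le> count p (mx p)} + card {p\<in>S. count p (mx p) = 1}"
    using card_Un_disjoint[OF _ _ d] assms(1) e by (metis (no_types, lifting) finite_Un)
  show "sum f S = sum f {p\<in>S. 2 \<le> count p (mx p)} + sum f {p\<in>S. count p (mx p) = 1}"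
    using sum.union_disjoint[OF _ _ d] assms(1) e by (metis (no_types, lifting) finite_Un)
qed

lemma GG_card: "card (GG (Suc (Suc n))) = card (GG (Suc n)) + card (GG n)"
proof -
  have "card (GG (Suc (Suc n))) = card {p\<in>GG (Suc (Suc n)). 2 \<le> count p (mx p)} + card {p\<in>GG (Suc (Suc n)). count p (mx p) = 1}"
    by (rule split_card(1)[OF finite_GG]) (auto simp: GG_def)
  also have "\<dots> = card (GG (Suc n)) + card (GG n)"
    using bij_betw_same_card[OF GG_b1[of n]] bij_betw_same_card[OF GG_b2[of n]] by simp
  finally show ?thesis .
qed

lemma GG_sum: "g (Suc (Suc n)) = g (Suc n) + card (GG (Suc n)) + g n"
proof -
  have "g (Suc (Suc n)) = sum size {p\<in>GG (Suc (Suc n)). 2 \<le> count p (mx p)} + sum size {p\<in>GG (Suc (Suc n)). count p (mx p) = 1}"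
    unfolding g_def by (rule split_card(2)[OF finite_GG]) (auto simp: GG_def)
  also have "sum size {p\<in>GG (Suc (Suc n)). 2 \<le> count p (mx p)} = (\<Sum>q\<in>GG (Suc n). size (A q))"
    using sum.reindex_bij_betw[OF GG_b1[of n, folded A_eq], of size] by simp
  also have "\<dots> = (\<Sum>q\<in>GG (Suc n). size q + 1)" by (simp add: A_size)
  also have "\<dots> = g (Suc n) + card (GG (Suc n))" by (simp add: sum_Suc g_def)
  also have "sum size {p\<in>GG (Suc (Suc n)). count p (mx p) = 1} = (\<Sum>q\<in>GG n. size (B 2 q))"
    using sum.reindex_bij_betw[OF GG_b2[of n], of size] by simp
  also have "\<dots> = g n" unfolding g_def by (rule sum.cong) (auto simp: B_size GG_def)
  finally show ?thesis by simp
qed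

lemma part0: "p \<noteq> {#} \<Longrightarrow> is_partition p \<Longrightarrow> perimeter p \<noteq> 0"
  using per'[of p] mx_in[of p] by (cases p) (auto simp: is_partition_def)

lemma part1: "p \<noteq> {#} \<Longrightarrow> is_partition p \<Longrightarrow> perimeter p = 1 \<Longrightarrow> p = {#1#}"
proof -
  assume a: "p \<noteq> {#}" "is_partition p" "perimeter p = 1"
  have "0 < mx p" using a mx_in[of p] by (auto simp: is_partition_def)
  moreover have "0 < size p" using a by (cases p) auto
  ultimately have "size p = 1" "mx p = 1" using per'[of p] a by auto
  then obtain x where "p = {#x#}" using size_1_singleton_mset by blast
  then show ?thesis using `mx p = 1` mx_in[of p] by auto
qed

lemma GG0: "GG 0 = {}"
proof (rule equals0I)
  fix p assume "p \<in> GG 0"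
  then show False using part0[of p] by (simp add: GG_def)
qed
lemma GG1': "GG (Suc 0) = {{#1#}}"
proof -
  have "perimeter {#1::nat#} = 1" by (simp add: perimeter_def)
  then have "{#1#} \<in> GG (Suc 0)" by (simp add: GG_def is_partition_def)
  moreover have "p \<in> GG (Suc 0) \<Longrightarrow> p = {#1#}" for p using part1[of p] by (simp add: GG_def)
  ultimately show ?thesis by blast
qed

lemma GG_fib: "card (GG n) = fib n"
  by (induction n rule: fib.induct) (auto simp: GG0 GG1' GG_card)

lemma split_P: assumes "finite S"
  shows "card S = card {p\<in>S. P p} + card {p\<in>S. \<not> P p}"
    and "sum f S = sum f {p\<in>S. P p} + sum f {p\<in>S. \<not> P p}"
proof -
  have e: "S = {p\<in>S. P p} \<union> {p\<in>S. \<not> P p}" by auto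
  have d: "{p\<in>S. P p} \<inter> {p\<in>S. \<not> P p} = {}" by auto
  show "card S = card {p\<in>S. P p} + card {p\<in>S. \<not> P p}"
    using card_Un_disjoint[OF _ _ d] assms(1) e by (metis (no_types, lifting) finite_Un)
  show "sum f S = sum f {p\<in>S. P p} + sum f {p\<in>S. \<not> P p}"
    using sum.union_disjoint[OF _ _ d] assms(1) e by (metis (no_types, lifting) finite_Un)
qed

lemma C_cnt: "count (C q) x = count q x + (if x = mx q + 1 then 1 else 0)"
  by (simp add: C_def)
lemma B_cnt: "count (B k q) x = count q x - (if x = mx q then 1 else 0) + (if x = mx q + k then 1 else 0)"
  by (simp add: B_def)
lemma Bi_cnt: "count (Bi k p) x = count p x - (if x = mx p then 1 else 0) + (if x = mx p - k then 1 else 0)"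
  by (simp add: Bi_def)
lemma R_cnt: "count (R p) x = count p x - (if x = mx p then 1 else 0)"
  by (simp add: R_def)

lemma mx_notin: "0 < k \<Longrightarrow> count q (mx q + k) = 0"
  using mx_ge[of "mx q + k" q] by (auto simp: not_in_iff[symmetric])

lemma HH_I: "p \<noteq> {#} \<Longrightarrow> \<forall>x\<in>#p. 0 < x \<Longrightarrow> (\<And>x. count p x \<le> 1) \<Longrightarrow> perimeter p = n \<Longrightarrow> p \<in> HH n"
  by (simp add: HH_def is_partition_def)

lemma HH_D: assumes "p \<in> HH n"
  shows "p \<noteq> {#}" "\<forall>x\<in>#p. 0 < x" "count p x \<le> 1" "mx p + size p = n + 1"
    "count p (mx p) = 1" "0 < mx p"
proof -
  show ne: "p \<noteq> {#}" using assms by (simp add: HH_def)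
  show a: "\<forall>x\<in>#p. 0 < x" using assms by (simp add: HH_def is_partition_def)
  show c: "count p x \<le> 1" for x using assms by (simp add: HH_def)
  show "mx p + size p = n + 1" using assms per_eq[OF ne] by (simp add: HH_def)
  have "0 < count p (mx p)" using mx_in[OF ne] by simp
  then show "count p (mx p) = 1" using c[of "mx p"] by linarith
  show "0 < mx p" using a mx_in[OF ne] by blast
qed

lemma HH_b1: "bij_betw C (HH n) {p\<in>HH (Suc (Suc n)). mx p - 1 \<in># p}"
proof (rule bij_betw_byWitness[where f'="R"])
  show "\<forall>a\<in>HH n. R (C a) = a" using HH_D(1) C_R by blast
  show "C ` HH n \<subseteq> {p\<in>HH (Suc (Suc n)). mx p - 1 \<in># p}"
  proof (rule image_subsetI, rule CollectI, rule conjI)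
    fix q assume q: "q \<in> HH n"
    note D = HH_D[OF q]
    have c: "count (C q) x \<le> 1" for x
      using D(3)[of x] mx_notin[of 1 q] by (cases "x = mx q + 1") (simp_all add: C_cnt)
    have "\<forall>x\<in>#C q. 0 < x" by (rule all_C) (use D(2) in auto)
    moreover have "perimeter (C q) = Suc (Suc n)" using C_per[OF D(1)] D(1) per_eq[OF D(1)] D(4) by simp
    ultimately show "C q \<in> HH (Suc (Suc n))" using C_ne c by (intro HH_I) auto
    show "mx (C q) - 1 \<in># C q" using D(1) mx_in[OF D(1)] by (simp add: C_mx C_mem)
  qed
  show "\<forall>a'\<in>{p\<in>HH (Suc (Suc n)). mx p - 1 \<in># p}. C (R a') = a'"
  proof
    fix p assume "p \<in> {p\<in>HH (Suc (Suc n)). mx p - 1 \<in># p}"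
    then have p: "p \<in> HH (Suc (Suc n))" "mx p - 1 \<in># p" by auto
    show "C (R p) = p" using R_C[OF HH_D(5)[OF p(1)] p(2) HH_D(6)[OF p(1)]] .
  qed
  show "R ` {p\<in>HH (Suc (Suc n)). mx p - 1 \<in># p} \<subseteq> HH n"
  proof (rule image_subsetI)
    fix p assume "p \<in> {p\<in>HH (Suc (Suc n)). mx p - 1 \<in># p}"
    then have p: "p \<in> HH (Suc (Suc n))" "mx p - 1 \<in># p" by auto
    note D = HH_D[OF p(1)]
    have m: "mx (R p) = mx p - 1" using R_mx1[OF D(5) p(2) D(6)] .
    have rne: "R p \<noteq> {#}" using R_ne1[OF D(5) p(2) D(6)] .
    have c: "count (R p) x \<le> 1" for x using D(3)[of x] by (simp add: R_cnt)
    have "\<forall>x\<in>#R p. 0 < x" by (rule all_R) (use D(2) in auto)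
    moreover have "perimeter (R p) = n" using per_eq[OF rne] m R_size[OF D(1)] D(4) D(6) by simp
    ultimately show "R p \<in> HH n" using rne c by (intro HH_I) auto
  qed
qed

lemma HH_b2: "bij_betw (B 1) (HH (Suc n)) {p\<in>HH (Suc (Suc n)). mx p - 1 \<notin># p}"
proof (rule bij_betw_byWitness[where f'="Bi 1"])
  show "\<forall>a\<in>HH (Suc n). Bi 1 (B 1 a) = a" using HH_D(1) B_Bi by blast
  show "B 1 ` HH (Suc n) \<subseteq> {p\<in>HH (Suc (Suc n)). mx p - 1 \<notin># p}"
  proof (rule image_subsetI, rule CollectI, rule conjI)
    fix q assume q: "q \<in> HH (Suc n)"
    note D = HH_D[OF q]
    have c: "count (B 1 q) x \<le> 1" for x
      using D(3)[of x] mx_notin[of 1 q] by (cases "x = mx q + 1") (simp_all add: B_cnt)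
    have "\<forall>x\<in>#B 1 q. 0 < x" by (rule all_B) (use D(2) in auto)
    moreover have "perimeter (B 1 q) = Suc (Suc n)" using B_per[OF D(1), of 1] per_eq[OF D(1)] D(4) by simp
    ultimately show "B 1 q \<in> HH (Suc (Suc n))" using B_ne c by (intro HH_I) auto
    have "count (B 1 q) (mx q) = 0" using D(5) by (simp add: B_cnt)
    then show "mx (B 1 q) - 1 \<notin># B 1 q" using D(1) by (simp add: B_mx not_in_iff)
  qed
  have key: "p \<in> HH (Suc (Suc n)) \<Longrightarrow> 2 \<le> mx p" for p
  proof -
    assume p: "p \<in> HH (Suc (Suc n))"
    note D = HH_D[OF p]
    have ip: "is_partition p" using D(2) by (simp add: is_partition_def)
    have "mx p \<noteq> 1" using one_mx[OF D(1) D(5) ip] D(4) by auto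
    then show ?thesis using D(6) by linarith
  qed
  have le: "p \<in> HH m \<Longrightarrow> x \<in># p - {#mx p#} \<Longrightarrow> x \<le> mx p - 1" for p m x
    using rest_lt[OF HH_D(5)] by fastforce
  show "\<forall>a'\<in>{p\<in>HH (Suc (Suc n)). mx p - 1 \<notin># p}. B 1 (Bi 1 a') = a'"
  proof
    fix p assume "p \<in> {p\<in>HH (Suc (Suc n)). mx p - 1 \<notin># p}"
    then have p: "p \<in> HH (Suc (Suc n))" by auto
    have "1 \<le> mx p" using key[OF p] by linarith
    then show "B 1 (Bi 1 p) = p" using Bi_B[OF HH_D(5)[OF p] le[OF p]] by blast
  qed
  show "Bi 1 ` {p\<in>HH (Suc (Suc n)). mx p - 1 \<notin># p} \<subseteq> HH (Suc n)"
  proof (rule image_subsetI)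
    fix p assume "p \<in> {p\<in>HH (Suc (Suc n)). mx p - 1 \<notin># p}"
    then have p: "p \<in> HH (Suc (Suc n))" "mx p - 1 \<notin># p" by auto
    note D = HH_D[OF p(1)]
    have m: "mx (Bi 1 p) = mx p - 1" using Bi_mx[OF D(5) le[OF p(1)]] .
    have k: "2 \<le> mx p" using key p by blast
    have c: "count (Bi 1 p) x \<le> 1" for x
      using D(3)[of x] p(2) k by (cases "x = mx p - 1") (simp_all add: Bi_cnt not_in_iff)
    have "\<forall>x\<in>#Bi 1 p. 0 < x" by (rule all_Bi) (use D(2) k in auto)
    moreover have "perimeter (Bi 1 p) = Suc n" using per_eq[OF Bi_ne] m Bi_size[OF D(1)] D(4) k by simp
    ultimately show "Bi 1 p \<in> HH (Suc n)" using Bi_ne c by (intro HH_I) auto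
  qed
qed

lemma HH_card: "card (HH (Suc (Suc n))) = card (HH (Suc n)) + card (HH n)"
proof -
  have "card (HH (Suc (Suc n))) = card {p\<in>HH (Suc (Suc n)). mx p - 1 \<in># p} + card {p\<in>HH (Suc (Suc n)). mx p - 1 \<notin># p}"
    by (rule split_P(1)[OF finite_HH])
  also have "\<dots> = card (HH n) + card (HH (Suc n))"
    using bij_betw_same_card[OF HH_b1[of n]] bij_betw_same_card[OF HH_b2[of n]] by simp
  finally show ?thesis by simp
qed

lemma HH_sum: "h (Suc (Suc n)) = h (Suc n) + h n + card (HH n)"
proof -
  have "h (Suc (Suc n)) = sum size {p\<in>HH (Suc (Suc n)). mx p - 1 \<in># p} + sum size {p\<in>HH (Suc (Suc n)). mx p - 1 \<notin># p}"
    unfolding h_def by (rule split_P(2)[OF finite_HH])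
  also have "sum size {p\<in>HH (Suc (Suc n)). mx p - 1 \<in># p} = (\<Sum>q\<in>HH n. size (C q))"
    using sum.reindex_bij_betw[OF HH_b1[of n], of size] by simp
  also have "\<dots> = (\<Sum>q\<in>HH n. Suc (size q))" by (simp add: C_size)
  also have "\<dots> = h n + card (HH n)" by (simp add: sum_Suc h_def)
  also have "sum size {p\<in>HH (Suc (Suc n)). mx p - 1 \<notin># p} = (\<Sum>q\<in>HH (Suc n). size (B 1 q))"
    using sum.reindex_bij_betw[OF HH_b2[of n], of size] by simp
  also have "\<dots> = h (Suc n)" unfolding h_def by (rule sum.cong) (auto simp: B_size dest: HH_D(1))
  finally show ?thesis by simp
qed

lemma HH0: "HH 0 = {}"
proof (rule equals0I)
  fix p assume "p \<in> HH 0"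
  then show False using part0[of p] by (simp add: HH_def)
qed
lemma HH1': "HH (Suc 0) = {{#1#}}"
proof -
  have "perimeter {#1::nat#} = 1" by (simp add: perimeter_def)
  then have "{#1#} \<in> HH (Suc 0)" by (simp add: HH_def is_partition_def)
  moreover have "p \<in> HH (Suc 0) \<Longrightarrow> p = {#1#}" for p using part1[of p] by (simp add: HH_def)
  ultimately show ?thesis by blast
qed

lemma HH_fib: "card (HH n) = fib n"
  by (induction n rule: fib.induct) (simp_all add: HH0 HH1' HH_card)

lemma GG_fib': "card (GG n) = fib n"
  by (induction n rule: fib.induct) (simp_all add: GG0 GG1' GG_card)

definition ev :: "nat multiset \<Rightarrow> nat set" where "ev p = {x \<in> set_mset p. even x}"

lemma GG1_I: "p \<noteq> {#} \<Longrightarrow> \<forall>x\<in>#p. 0 < x \<Longrightarrow> card (ev p) = 1 \<Longrightarrow> perimeter p = n \<Longrightarrow> p \<in> GG1 n"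
  by (simp add: GG1_def is_partition_def ev_def)

lemma GG1_D: assumes "p \<in> GG1 n"
  shows "p \<noteq> {#}" "\<forall>x\<in>#p. 0 < x" "card (ev p) = 1" "mx p + size p = n + 1" "0 < mx p"
proof -
  show ne: "p \<noteq> {#}" using assms by (simp add: GG1_def)
  show a: "\<forall>x\<in>#p. 0 < x" using assms by (simp add: GG1_def is_partition_def)
  show "card (ev p) = 1" using assms by (simp add: GG1_def ev_def)
  show "mx p + size p = n + 1" using assms per_eq[OF ne] by (simp add: GG1_def)
  show "0 < mx p" using a mx_in[OF ne] by blast
qed

lemma GG_I: "p \<noteq> {#} \<Longrightarrow> \<forall>x\<in>#p. 0 < x \<and> odd x \<Longrightarrow> perimeter p = n \<Longrightarrow> p \<in> GG n"
  by (simp add: GG_def is_partition_def)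

lemma GG_D: assumes "p \<in> GG n"
  shows "p \<noteq> {#}" "\<forall>x\<in>#p. 0 < x \<and> odd x" "mx p + size p = n + 1" "0 < mx p" "odd (mx p)"
proof -
  show ne: "p \<noteq> {#}" using assms by (simp add: GG_def)
  show a: "\<forall>x\<in>#p. 0 < x \<and> odd x" using assms by (simp add: GG_def is_partition_def)
  show "mx p + size p = n + 1" using assms per_eq[OF ne] by (simp add: GG_def)
  show "0 < mx p" "odd (mx p)" using a mx_in[OF ne] by blast+
qed

lemma ev_alt: "ev p = {x. 0 < count p x \<and> even x}"
  by (auto simp: ev_def)

lemma card1: "card S = 1 \<longleftrightarrow> (\<exists>e. S = {e})"
  by (simp add: card_1_singleton_iff)

lemma GG1_b1: "bij_betw A (GG1 (Suc n)) {p\<in>GG1 (Suc (Suc n)). 2 \<le> count p (mx p)}"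
proof (rule bij_betw_byWitness[where f'="R"])
  show "\<forall>a\<in>GG1 (Suc n). R (A a) = a" using GG1_D(1) A_R by blast
  show "A ` GG1 (Suc n) \<subseteq> {p\<in>GG1 (Suc (Suc n)). 2 \<le> count p (mx p)}"
  proof (rule image_subsetI, rule CollectI, rule conjI)
    fix q assume q: "q \<in> GG1 (Suc n)"
    note D = GG1_D[OF q]
    have "ev (A q) = ev q" using A_set[OF D(1)] by (simp add: ev_def)
    moreover have "\<forall>x\<in>#A q. 0 < x" by (rule all_A[OF D(1)]) (use D(2) in auto)
    moreover have "perimeter (A q) = Suc (Suc n)" using A_per[OF D(1)] per_eq[OF D(1)] D(4) by simp
    ultimately show "A q \<in> GG1 (Suc (Suc n))" using A_ne D(3) by (intro GG1_I) auto
    show "2 \<le> count (A q) (mx (A q))" using A_count[OF D(1)] mx_in[OF D(1)] by simp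
  qed
  show "\<forall>a'\<in>{p\<in>GG1 (Suc (Suc n)). 2 \<le> count p (mx p)}. A (R a') = a'"
    using R_A by blast
  show "R ` {p\<in>GG1 (Suc (Suc n)). 2 \<le> count p (mx p)} \<subseteq> GG1 (Suc n)"
  proof (rule image_subsetI)
    fix p assume "p \<in> {p\<in>GG1 (Suc (Suc n)). 2 \<le> count p (mx p)}"
    then have p: "p \<in> GG1 (Suc (Suc n))" "2 \<le> count p (mx p)" by auto
    note D = GG1_D[OF p(1)]
    have "set_mset (R p) = set_mset p" using p(2) by (auto simp: R_def in_diff_count dest: in_diffD)
    then have "ev (R p) = ev p" by (simp add: ev_def)
    moreover have "\<forall>x\<in>#R p. 0 < x" by (rule all_R) (use D(2) in auto)
    moreover have "perimeter (R p) = Suc n" using per_eq[OF R_ne2[OF p(2)]] R_mx[OF p(2)] R_size[OF D(1)] D(4) by simp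
    ultimately show "R p \<in> GG1 (Suc n)" using R_ne2[OF p(2)] D(3) by (intro GG1_I) auto
  qed
qed

lemma GG1_b2: "bij_betw (B 1) (GG (Suc n)) {p\<in>{p\<in>GG1 (Suc (Suc n)). count p (mx p) = 1}. even (mx p)}"
proof (rule bij_betw_byWitness[where f'="Bi 1"])
  show "\<forall>a\<in>GG (Suc n). Bi 1 (B 1 a) = a" using GG_D(1) B_Bi by blast
  show "B 1 ` GG (Suc n) \<subseteq> {p\<in>{p\<in>GG1 (Suc (Suc n)). count p (mx p) = 1}. even (mx p)}"
  proof (rule image_subsetI)
    fix q assume q: "q \<in> GG (Suc n)"
    note D = GG_D[OF q]
    have "ev (B 1 q) = {mx q + 1}"
    proof -
      have "x \<in># B 1 q \<and> even x \<longleftrightarrow> x = mx q + 1" for x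
      proof -
        have "x \<in># q - {#mx q#} \<Longrightarrow> odd x" using D(2) by (auto dest: in_diffD)
        then show ?thesis using D(5) B_mem[OF D(1), of x 1] by auto
      qed
      then show ?thesis by (auto simp: ev_def)
    qed
    moreover have "\<forall>x\<in>#B 1 q. 0 < x" by (rule all_B) (use D(2) in auto)
    moreover have "perimeter (B 1 q) = Suc (Suc n)" using B_per[OF D(1), of 1] per_eq[OF D(1)] D(3) by simp
    ultimately have "B 1 q \<in> GG1 (Suc (Suc n))" using B_ne by (intro GG1_I) auto
    moreover have "count (B 1 q) (mx (B 1 q)) = 1" using B_count[OF D(1)] by simp
    moreover have "even (mx (B 1 q))" using B_mx[OF D(1)] D(5) by simp
    ultimately show "B 1 q \<in> {p\<in>{p\<in>GG1 (Suc (Suc n)). count p (mx p) = 1}. even (mx p)}" by simp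
  qed
  have key: "2 \<le> mx p \<and> (\<forall>x\<in># p - {#mx p#}. odd x \<and> x \<le> mx p - 1)"
    if p: "p \<in> GG1 (Suc (Suc n))" "count p (mx p) = 1" "even (mx p)" for p
  proof -
    note D = GG1_D[OF p(1)]
    have "mx p \<in> ev p" using mx_in[OF D(1)] p(3) by (simp add: ev_def)
    moreover obtain e where "ev p = {e}" using D(3)[unfolded card1] by blast
    ultimately have evp: "ev p = {mx p}" by simp
    have "2 \<le> mx p" using D(5) p(3) by presburger
    moreover have "odd x \<and> x \<le> mx p - 1" if x: "x \<in># p - {#mx p#}" for x
    proof -
      have lt: "x < mx p" using rest_lt[OF p(2) x] .
      have "x \<in># p" using x by (rule in_diffD)
      moreover have "x \<notin> ev p" using evp lt by auto
      ultimately have "odd x" by (simp add: ev_def)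
      then show ?thesis using lt by simp
    qed
    ultimately show ?thesis by blast
  qed
  show "\<forall>a'\<in>{p\<in>{p\<in>GG1 (Suc (Suc n)). count p (mx p) = 1}. even (mx p)}. B 1 (Bi 1 a') = a'"
  proof
    fix p assume "p \<in> {p\<in>{p\<in>GG1 (Suc (Suc n)). count p (mx p) = 1}. even (mx p)}"
    then have p: "p \<in> GG1 (Suc (Suc n))" "count p (mx p) = 1" "even (mx p)" by auto
    have k: "2 \<le> mx p" "\<And>x. x \<in># p - {#mx p#} \<Longrightarrow> x \<le> mx p - 1" using key[OF p] by auto
    have "1 \<le> mx p" using k(1) by linarith
    then show "B 1 (Bi 1 p) = p" using Bi_B[OF p(2) k(2)] by blast
  qed
  show "Bi 1 ` {p\<in>{p\<in>GG1 (Suc (Suc n)). count p (mx p) = 1}. even (mx p)} \<subseteq> GG (Suc n)"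
  proof (rule image_subsetI)
    fix p assume "p \<in> {p\<in>{p\<in>GG1 (Suc (Suc n)). count p (mx p) = 1}. even (mx p)}"
    then have p: "p \<in> GG1 (Suc (Suc n))" "count p (mx p) = 1" "even (mx p)" by auto
    note D = GG1_D[OF p(1)]
    have k: "2 \<le> mx p" "\<forall>x\<in># p - {#mx p#}. odd x \<and> x \<le> mx p - 1" using key[OF p] by auto
    have m: "mx (Bi 1 p) = mx p - 1" using Bi_mx[OF p(2)] k(2) by blast
    have "\<forall>x\<in>#Bi 1 p. 0 < x \<and> odd x"
    proof
      fix x assume "x \<in># Bi 1 p"
      then have "x = mx p - 1 \<or> x \<in># p - {#mx p#}" by (simp only: Bi_mem)
      moreover have "x \<in># p - {#mx p#} \<Longrightarrow> 0 < x" using D(2) by (auto dest: in_diffD)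
      moreover have "x \<in># p - {#mx p#} \<Longrightarrow> odd x" using k(2) by blast
      moreover have "odd (mx p - 1) \<and> 0 < mx p - 1" using k(1) p(3) by presburger
      ultimately show "0 < x \<and> odd x" by blast
    qed
    moreover have "perimeter (Bi 1 p) = Suc n" using per_eq[OF Bi_ne] m Bi_size[OF D(1)] D(4) k(1) by simp
    ultimately show "Bi 1 p \<in> GG (Suc n)" using Bi_ne by (intro GG_I) auto
  qed
qed

lemma in_diff_ne: "x \<noteq> a \<Longrightarrow> x \<in># q - {#a#} \<longleftrightarrow> x \<in># q"
  by (simp add: in_diff_count)

lemma GG1_b3: "bij_betw C {q\<in>GG1 n. even (mx q)}
   {p\<in>{p\<in>{p\<in>GG1 (Suc (Suc n)). count p (mx p) = 1}. \<not> even (mx p)}. mx p - 1 \<in># p}"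
proof (rule bij_betw_byWitness[where f'="R"])
  show "\<forall>a\<in>{q\<in>GG1 n. even (mx q)}. R (C a) = a" using GG1_D(1) C_R by blast
  show "C ` {q\<in>GG1 n. even (mx q)} \<subseteq> {p\<in>{p\<in>{p\<in>GG1 (Suc (Suc n)). count p (mx p) = 1}. \<not> even (mx p)}. mx p - 1 \<in># p}"
  proof (rule image_subsetI)
    fix q assume "q \<in> {q\<in>GG1 n. even (mx q)}"
    then have q: "q \<in> GG1 n" "even (mx q)" by auto
    note D = GG1_D[OF q(1)]
    have o: "odd (mx q + 1)" using q(2) by simp
    have "ev (C q) = ev q"
    proof -
      have "x \<in># C q \<and> even x \<longleftrightarrow> x \<in># q \<and> even x" for x
        using o C_mem[of x q] by auto
      then show ?thesis by (simp add: ev_def)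
    qed
    moreover have "\<forall>x\<in>#C q. 0 < x" by (rule all_C) (use D(2) in auto)
    moreover have "perimeter (C q) = Suc (Suc n)" using C_per[OF D(1)] per_eq[OF D(1)] D(4) by simp
    ultimately have "C q \<in> GG1 (Suc (Suc n))" using C_ne D(3) by (intro GG1_I) auto
    moreover have "count (C q) (mx (C q)) = 1" using C_count[OF D(1)] .
    moreover have "\<not> even (mx (C q))" using C_mx[OF D(1)] o by simp
    moreover have "mx (C q) - 1 \<in># C q" using C_mx[OF D(1)] mx_in[OF D(1)] by (simp add: C_mem)
    ultimately show "C q \<in> {p\<in>{p\<in>{p\<in>GG1 (Suc (Suc n)). count p (mx p) = 1}. \<not> even (mx p)}. mx p - 1 \<in># p}"
      by simp
  qed
  show "\<forall>a'\<in>{p\<in>{p\<in>{p\<in>GG1 (Suc (Suc n)). count p (mx p) = 1}. \<not> even (mx p)}. mx p - 1 \<in># p}. C (R a') = a'"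
  proof
    fix p assume "p \<in> {p\<in>{p\<in>{p\<in>GG1 (Suc (Suc n)). count p (mx p) = 1}. \<not> even (mx p)}. mx p - 1 \<in># p}"
    then have p: "p \<in> GG1 (Suc (Suc n))" "count p (mx p) = 1" "mx p - 1 \<in># p" by auto
    show "C (R p) = p" using R_C[OF p(2) p(3) GG1_D(5)[OF p(1)]] .
  qed
  show "R ` {p\<in>{p\<in>{p\<in>GG1 (Suc (Suc n)). count p (mx p) = 1}. \<not> even (mx p)}. mx p - 1 \<in># p} \<subseteq> {q\<in>GG1 n. even (mx q)}"
  proof (rule image_subsetI)
    fix p assume "p \<in> {p\<in>{p\<in>{p\<in>GG1 (Suc (Suc n)). count p (mx p) = 1}. \<not> even (mx p)}. mx p - 1 \<in># p}"
    then have p: "p \<in> GG1 (Suc (Suc n))" "count p (mx p) = 1" "\<not> even (mx p)" "mx p - 1 \<in># p" by auto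
    note D = GG1_D[OF p(1)]
    have m: "mx (R p) = mx p - 1" using R_mx1[OF p(2) p(4) D(5)] .
    have rne: "R p \<noteq> {#}" using R_ne1[OF p(2) p(4) D(5)] .
    have "ev (R p) = ev p"
    proof -
      have "x \<in># R p \<and> even x \<longleftrightarrow> x \<in># p \<and> even x" for x
      proof (cases "x = mx p")
        case True then show ?thesis using p(3) by simp
      next
        case False then show ?thesis by (simp add: R_def in_diff_ne)
      qed
      then show ?thesis by (simp add: ev_def)
    qed
    moreover have "\<forall>x\<in>#R p. 0 < x" by (rule all_R) (use D(2) in auto)
    moreover have "perimeter (R p) = n" using per_eq[OF rne] m R_size[OF D(1)] D(4) D(5) by simp
    ultimately have "R p \<in> GG1 n" using rne D(3) by (intro GG1_I) auto
    moreover have "even (mx (R p))" using m p(3) D(5) by presburger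
    ultimately show "R p \<in> {q\<in>GG1 n. even (mx q)}" by simp
  qed
qed

lemma GG1_b4: "bij_betw (B 2) {q\<in>GG1 n. \<not> even (mx q)}
   {p\<in>{p\<in>{p\<in>GG1 (Suc (Suc n)). count p (mx p) = 1}. \<not> even (mx p)}. \<not> mx p - 1 \<in># p}"
proof (rule bij_betw_byWitness[where f'="Bi 2"])
  show "\<forall>a\<in>{q\<in>GG1 n. \<not> even (mx q)}. Bi 2 (B 2 a) = a" using GG1_D(1) B_Bi by blast
  show "B 2 ` {q\<in>GG1 n. \<not> even (mx q)} \<subseteq> {p\<in>{p\<in>{p\<in>GG1 (Suc (Suc n)). count p (mx p) = 1}. \<not> even (mx p)}. \<not> mx p - 1 \<in># p}"
  proof (rule image_subsetI)
    fix q assume "q \<in> {q\<in>GG1 n. \<not> even (mx q)}"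
    then have q: "q \<in> GG1 n" "\<not> even (mx q)" by auto
    note D = GG1_D[OF q(1)]
    have o: "odd (mx q + 2)" using q(2) by simp
    have "ev (B 2 q) = ev q"
    proof -
      have "x \<in># B 2 q \<and> even x \<longleftrightarrow> x \<in># q \<and> even x" for x
      proof (cases "even x")
        case True
        then have "x \<noteq> mx q + 2" "x \<noteq> mx q" using o q(2) by auto
        then show ?thesis using B_mem[OF D(1), of x 2] in_diff_ne[of x "mx q" q] by simp
      qed simp
      then show ?thesis by (simp add: ev_def)
    qed
    moreover have "\<forall>x\<in>#B 2 q. 0 < x" by (rule all_B) (use D(2) in auto)
    moreover have "perimeter (B 2 q) = Suc (Suc n)" using B_per[OF D(1), of 2] per_eq[OF D(1)] D(4) by simp
    ultimately have "B 2 q \<in> GG1 (Suc (Suc n))" using B_ne D(3) by (intro GG1_I) auto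
    moreover have "count (B 2 q) (mx (B 2 q)) = 1" using B_count[OF D(1)] by simp
    moreover have "\<not> even (mx (B 2 q))" using B_mx[OF D(1)] o by simp
    moreover have "\<not> mx (B 2 q) - 1 \<in># B 2 q"
    proof
      assume "mx (B 2 q) - 1 \<in># B 2 q"
      then have "mx q + 1 \<in># B 2 q" using B_mx[OF D(1), of 2] by simp
      then have "mx q + 1 \<in># q - {#mx q#}" using B_mem[OF D(1), of "mx q + 1" 2] by simp
      then have "mx q + 1 \<in># q" by (rule in_diffD)
      then show False using mx_ge[of "mx q + 1" q] by simp
    qed
    ultimately show "B 2 q \<in> {p\<in>{p\<in>{p\<in>GG1 (Suc (Suc n)). count p (mx p) = 1}. \<not> even (mx p)}. \<not> mx p - 1 \<in># p}"
      by simp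
  qed
  have key: "3 \<le> mx p \<and> (\<forall>x\<in># p - {#mx p#}. x \<le> mx p - 2)"
    if p: "p \<in> GG1 (Suc (Suc n))" "count p (mx p) = 1" "\<not> even (mx p)" "\<not> mx p - 1 \<in># p" for p
  proof -
    note D = GG1_D[OF p(1)]
    obtain e where "ev p = {e}" using D(3)[unfolded card1] by blast
    then have e: "e \<in># p" "even e" by (auto simp: ev_def)
    have "e \<le> mx p" using mx_ge[OF e(1)] .
    moreover have "0 < e" using D(2) e(1) by blast
    ultimately have "3 \<le> mx p" using e(2) p(3) by presburger
    moreover have "x \<le> mx p - 2" if x: "x \<in># p - {#mx p#}" for x
    proof -
      have lt: "x < mx p" using rest_lt[OF p(2) x] .
      have "x \<in># p" using x by (rule in_diffD)
      then have "x \<noteq> mx p - 1" using p(4) by auto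
      then show ?thesis using lt by simp
    qed
    ultimately show ?thesis by blast
  qed
  show "\<forall>a'\<in>{p\<in>{p\<in>{p\<in>GG1 (Suc (Suc n)). count p (mx p) = 1}. \<not> even (mx p)}. \<not> mx p - 1 \<in># p}. B 2 (Bi 2 a') = a'"
  proof
    fix p assume "p \<in> {p\<in>{p\<in>{p\<in>GG1 (Suc (Suc n)). count p (mx p) = 1}. \<not> even (mx p)}. \<not> mx p - 1 \<in># p}"
    then have p: "p \<in> GG1 (Suc (Suc n))" "count p (mx p) = 1" "\<not> even (mx p)" "\<not> mx p - 1 \<in># p" by auto
    have k: "3 \<le> mx p" "\<And>x. x \<in># p - {#mx p#} \<Longrightarrow> x \<le> mx p - 2" using key[OF p] by auto
    have "2 \<le> mx p" using k(1) by linarith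
    then show "B 2 (Bi 2 p) = p" using Bi_B[OF p(2) k(2)] by blast
  qed
  show "Bi 2 ` {p\<in>{p\<in>{p\<in>GG1 (Suc (Suc n)). count p (mx p) = 1}. \<not> even (mx p)}. \<not> mx p - 1 \<in># p} \<subseteq> {q\<in>GG1 n. \<not> even (mx q)}"
  proof (rule image_subsetI)
    fix p assume "p \<in> {p\<in>{p\<in>{p\<in>GG1 (Suc (Suc n)). count p (mx p) = 1}. \<not> even (mx p)}. \<not> mx p - 1 \<in># p}"
    then have p: "p \<in> GG1 (Suc (Suc n))" "count p (mx p) = 1" "\<not> even (mx p)" "\<not> mx p - 1 \<in># p" by auto
    note D = GG1_D[OF p(1)]
    have k: "3 \<le> mx p" "\<forall>x\<in># p - {#mx p#}. x \<le> mx p - 2" using key[OF p] by auto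
    have m: "mx (Bi 2 p) = mx p - 2" using Bi_mx[OF p(2)] k(2) by blast
    have o: "odd (mx p - 2)" "0 < mx p - 2" using k(1) p(3) by presburger+
    have "ev (Bi 2 p) = ev p"
    proof -
      have "x \<in># Bi 2 p \<and> even x \<longleftrightarrow> x \<in># p \<and> even x" for x
      proof (cases "even x")
        case True
        then have "x \<noteq> mx p - 2" "x \<noteq> mx p" using o p(3) by auto
        then show ?thesis using Bi_mem[of x 2 p] in_diff_ne[of x "mx p" p] by simp
      qed simp
      then show ?thesis by (simp add: ev_def)
    qed
    moreover have "\<forall>x\<in>#Bi 2 p. 0 < x" by (rule all_Bi) (use D(2) o in auto)
    moreover have "perimeter (Bi 2 p) = n" using per_eq[OF Bi_ne] m Bi_size[OF D(1)] D(4) k(1) by simp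
    ultimately have "Bi 2 p \<in> GG1 n" using Bi_ne D(3) by (intro GG1_I) auto
    moreover have "\<not> even (mx (Bi 2 p))" using m o by simp
    ultimately show "Bi 2 p \<in> {q\<in>GG1 n. \<not> even (mx q)}" by simp
  qed
qed

lemma GG1_card: "g1 (Suc (Suc n)) = g1 (Suc n) + g1 n + fib (Suc n)"
proof -
  let ?S = "GG1 (Suc (Suc n))"
  let ?T = "{p\<in>?S. count p (mx p) = 1}"
  let ?U = "{p\<in>?T. \<not> even (mx p)}"
  have fT: "finite ?T" by (rule finite_subset[OF _ finite_GG1]) auto
  have fU: "finite ?U" by (rule finite_subset[OF _ finite_GG1]) auto
  have "g1 (Suc (Suc n)) = card {p\<in>?S. 2 \<le> count p (mx p)} + card ?T"
    unfolding g1_def by (rule split_card(1)[OF finite_GG1]) (auto simp: GG1_def)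
  also have "card ?T = card {p\<in>?T. even (mx p)} + card ?U"
    by (rule split_P(1)[OF fT])
  also have "card ?U = card {p\<in>?U. mx p - 1 \<in># p} + card {p\<in>?U. \<not> mx p - 1 \<in># p}"
    by (rule split_P(1)[OF fU])
  also have "card {p\<in>?S. 2 \<le> count p (mx p)} = g1 (Suc n)"
    unfolding g1_def using bij_betw_same_card[OF GG1_b1[of n]] by simp
  also have "card {p\<in>?T. even (mx p)} = fib (Suc n)"
    using bij_betw_same_card[OF GG1_b2[of n]] GG_fib'[of "Suc n"] by simp
  also have "card {p\<in>?U. mx p - 1 \<in># p} = card {q\<in>GG1 n. even (mx q)}"
    using bij_betw_same_card[OF GG1_b3[of n]] by simp
  also have "card {p\<in>?U. \<not> mx p - 1 \<in># p} = card {q\<in>GG1 n. \<not> even (mx q)}"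
    using bij_betw_same_card[OF GG1_b4[of n]] by simp
  also have "card {q\<in>GG1 n. even (mx q)} + card {q\<in>GG1 n. \<not> even (mx q)} = g1 n"
    unfolding g1_def by (rule split_P(1)[OF finite_GG1, symmetric])
  finally show ?thesis by simp
qed

definition rp :: "nat multiset \<Rightarrow> nat set" where "rp p = {x \<in> set_mset p. 2 \<le> count p x}"

lemma rp_alt: "rp p = {x. 2 \<le> count p x}"
  by (auto simp: rp_def simp flip: count_greater_zero_iff)

lemma rp_eqI: "(\<And>x. 2 \<le> count p x \<longleftrightarrow> 2 \<le> count q x) \<Longrightarrow> rp p = rp q"
  by (simp add: rp_alt)

lemma HH1_I: "p \<noteq> {#} \<Longrightarrow> \<forall>x\<in>#p. 0 < x \<Longrightarrow> card (rp p) = 1 \<Longrightarrow> perimeter p = n \<Longrightarrow> p \<in> HH1 n"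
  by (simp add: HH1_def is_partition_def rp_def)

lemma HH1_D: assumes "p \<in> HH1 n"
  shows "p \<noteq> {#}" "\<forall>x\<in>#p. 0 < x" "card (rp p) = 1" "mx p + size p = n + 1" "0 < mx p"
proof -
  show ne: "p \<noteq> {#}" using assms by (simp add: HH1_def)
  show a: "\<forall>x\<in>#p. 0 < x" using assms by (simp add: HH1_def is_partition_def)
  show "card (rp p) = 1" using assms by (simp add: HH1_def rp_def)
  show "mx p + size p = n + 1" using assms per_eq[OF ne] by (simp add: HH1_def)
  show "0 < mx p" using a mx_in[OF ne] by blast
qed

lemma A_cnt: "count (A q) x = count q x + (if x = mx q then 1 else 0)"
  by (simp add: A_def)

lemma HH1_b1: "bij_betw A {q\<in>HH1 (Suc n). 2 \<le> count q (mx q)}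
  {p\<in>{p\<in>HH1 (Suc (Suc n)). 2 \<le> count p (mx p)}. 3 \<le> count p (mx p)}"
proof (rule bij_betw_byWitness[where f'="R"])
  show "\<forall>a\<in>{q\<in>HH1 (Suc n). 2 \<le> count q (mx q)}. R (A a) = a" using HH1_D(1) A_R by blast
  show "A ` {q\<in>HH1 (Suc n). 2 \<le> count q (mx q)} \<subseteq> {p\<in>{p\<in>HH1 (Suc (Suc n)). 2 \<le> count p (mx p)}. 3 \<le> count p (mx p)}"
  proof (rule image_subsetI)
    fix q assume "q \<in> {q\<in>HH1 (Suc n). 2 \<le> count q (mx q)}"
    then have q: "q \<in> HH1 (Suc n)" "2 \<le> count q (mx q)" by auto
    note D = HH1_D[OF q(1)]
    have "rp (A q) = rp q"
    proof (rule rp_eqI)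
      fix x show "2 \<le> count (A q) x \<longleftrightarrow> 2 \<le> count q x"
        using q(2) mx_in[OF D(1)] by (cases "x = mx q") (simp_all add: A_cnt)
    qed
    moreover have "\<forall>x\<in>#A q. 0 < x" by (rule all_A[OF D(1)]) (use D(2) in auto)
    moreover have "perimeter (A q) = Suc (Suc n)" using A_per[OF D(1)] per_eq[OF D(1)] D(4) by simp
    ultimately have "A q \<in> HH1 (Suc (Suc n))" using A_ne D(3) by (intro HH1_I) auto
    moreover have "3 \<le> count (A q) (mx (A q))" using A_count[OF D(1)] q(2) by simp
    ultimately show "A q \<in> {p\<in>{p\<in>HH1 (Suc (Suc n)). 2 \<le> count p (mx p)}. 3 \<le> count p (mx p)}" by simp
  qed
  show "\<forall>a'\<in>{p\<in>{p\<in>HH1 (Suc (Suc n)). 2 \<le> count p (mx p)}. 3 \<le> count p (mx p)}. A (R a') = a'"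
    using R_A by blast
  show "R ` {p\<in>{p\<in>HH1 (Suc (Suc n)). 2 \<le> count p (mx p)}. 3 \<le> count p (mx p)} \<subseteq> {q\<in>HH1 (Suc n). 2 \<le> count q (mx q)}"
  proof (rule image_subsetI)
    fix p assume "p \<in> {p\<in>{p\<in>HH1 (Suc (Suc n)). 2 \<le> count p (mx p)}. 3 \<le> count p (mx p)}"
    then have p: "p \<in> HH1 (Suc (Suc n))" "2 \<le> count p (mx p)" "3 \<le> count p (mx p)" by auto
    note D = HH1_D[OF p(1)]
    have "rp (R p) = rp p"
    proof (rule rp_eqI)
      fix x show "2 \<le> count (R p) x \<longleftrightarrow> 2 \<le> count p x"
        using p(3) by (cases "x = mx p") (simp_all add: R_cnt)
    qed
    moreover have "\<forall>x\<in>#R p. 0 < x" by (rule all_R) (use D(2) in auto)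
    moreover have "perimeter (R p) = Suc n" using per_eq[OF R_ne2[OF p(2)]] R_mx[OF p(2)] R_size[OF D(1)] D(4) by simp
    ultimately have "R p \<in> HH1 (Suc n)" using R_ne2[OF p(2)] D(3) by (intro HH1_I) auto
    moreover have "2 \<le> count (R p) (mx (R p))" using R_count[OF p(2)] p(3) by simp
    ultimately show "R p \<in> {q\<in>HH1 (Suc n). 2 \<le> count q (mx q)}" by simp
  qed
qed

lemma HH1_b2: "bij_betw A (HH (Suc n))
  {p\<in>{p\<in>HH1 (Suc (Suc n)). 2 \<le> count p (mx p)}. \<not> 3 \<le> count p (mx p)}"
proof (rule bij_betw_byWitness[where f'="R"])
  show "\<forall>a\<in>HH (Suc n). R (A a) = a" using HH_D(1) A_R by blast
  show "A ` HH (Suc n) \<subseteq> {p\<in>{p\<in>HH1 (Suc (Suc n)). 2 \<le> count p (mx p)}. \<not> 3 \<le> count p (mx p)}"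
  proof (rule image_subsetI)
    fix q assume q: "q \<in> HH (Suc n)"
    note D = HH_D[OF q]
    have "rp (A q) = {mx q}"
    proof -
      have "2 \<le> count (A q) x \<longleftrightarrow> x = mx q" for x
        using D(3)[of x] D(5) by (cases "x = mx q") (simp_all add: A_cnt)
      then show ?thesis by (auto simp: rp_alt)
    qed
    moreover have "\<forall>x\<in>#A q. 0 < x" by (rule all_A[OF D(1)]) (use D(2) in auto)
    moreover have "perimeter (A q) = Suc (Suc n)" using A_per[OF D(1)] per_eq[OF D(1)] D(4) by simp
    ultimately have "A q \<in> HH1 (Suc (Suc n))" using A_ne by (intro HH1_I) auto
    moreover have "count (A q) (mx (A q)) = 2" using A_count[OF D(1)] D(5) by simp
    ultimately show "A q \<in> {p\<in>{p\<in>HH1 (Suc (Suc n)). 2 \<le> count p (mx p)}. \<not> 3 \<le> count p (mx p)}" by simp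
  qed
  show "\<forall>a'\<in>{p\<in>{p\<in>HH1 (Suc (Suc n)). 2 \<le> count p (mx p)}. \<not> 3 \<le> count p (mx p)}. A (R a') = a'"
    using R_A by blast
  show "R ` {p\<in>{p\<in>HH1 (Suc (Suc n)). 2 \<le> count p (mx p)}. \<not> 3 \<le> count p (mx p)} \<subseteq> HH (Suc n)"
  proof (rule image_subsetI)
    fix p assume "p \<in> {p\<in>{p\<in>HH1 (Suc (Suc n)). 2 \<le> count p (mx p)}. \<not> 3 \<le> count p (mx p)}"
    then have p: "p \<in> HH1 (Suc (Suc n))" "2 \<le> count p (mx p)" "\<not> 3 \<le> count p (mx p)" by auto
    note D = HH1_D[OF p(1)]
    have "mx p \<in> rp p" using p(2) by (simp add: rp_alt)
    moreover obtain e where "rp p = {e}" using D(3)[unfolded card1] by blast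
    ultimately have rpp: "rp p = {mx p}" by simp
    have c: "count (R p) x \<le> 1" for x
    proof (cases "x = mx p")
      case True then show ?thesis using p(3) by (simp add: R_cnt)
    next
      case False
      then have "x \<notin> rp p" using rpp by simp
      then have "count p x \<le> 1" by (simp add: rp_alt)
      then show ?thesis using False by (simp add: R_cnt)
    qed
    have "\<forall>x\<in>#R p. 0 < x" by (rule all_R) (use D(2) in auto)
    moreover have "perimeter (R p) = Suc n" using per_eq[OF R_ne2[OF p(2)]] R_mx[OF p(2)] R_size[OF D(1)] D(4) by simp
    ultimately show "R p \<in> HH (Suc n)" using R_ne2[OF p(2)] c by (intro HH_I) auto
  qed
qed

lemma HH1_b3: "bij_betw C (HH1 n) {p\<in>{p\<in>HH1 (Suc (Suc n)). count p (mx p) = 1}. mx p - 1 \<in># p}"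
proof (rule bij_betw_byWitness[where f'="R"])
  show "\<forall>a\<in>HH1 n. R (C a) = a" using HH1_D(1) C_R by blast
  show "C ` HH1 n \<subseteq> {p\<in>{p\<in>HH1 (Suc (Suc n)). count p (mx p) = 1}. mx p - 1 \<in># p}"
  proof (rule image_subsetI)
    fix q assume q: "q \<in> HH1 n"
    note D = HH1_D[OF q]
    have "rp (C q) = rp q"
    proof (rule rp_eqI)
      fix x show "2 \<le> count (C q) x \<longleftrightarrow> 2 \<le> count q x"
        using mx_notin[of 1 q] by (cases "x = mx q + 1") (simp_all add: C_cnt)
    qed
    moreover have "\<forall>x\<in>#C q. 0 < x" by (rule all_C) (use D(2) in auto)
    moreover have "perimeter (C q) = Suc (Suc n)" using C_per[OF D(1)] per_eq[OF D(1)] D(4) by simp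
    ultimately have "C q \<in> HH1 (Suc (Suc n))" using C_ne D(3) by (intro HH1_I) auto
    moreover have "count (C q) (mx (C q)) = 1" using C_count[OF D(1)] .
    moreover have "mx (C q) - 1 \<in># C q" using C_mx[OF D(1)] mx_in[OF D(1)] by (simp add: C_mem)
    ultimately show "C q \<in> {p\<in>{p\<in>HH1 (Suc (Suc n)). count p (mx p) = 1}. mx p - 1 \<in># p}" by simp
  qed
  show "\<forall>a'\<in>{p\<in>{p\<in>HH1 (Suc (Suc n)). count p (mx p) = 1}. mx p - 1 \<in># p}. C (R a') = a'"
  proof
    fix p assume "p \<in> {p\<in>{p\<in>HH1 (Suc (Suc n)). count p (mx p) = 1}. mx p - 1 \<in># p}"
    then have p: "p \<in> HH1 (Suc (Suc n))" "count p (mx p) = 1" "mx p - 1 \<in># p" by auto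
    show "C (R p) = p" using R_C[OF p(2) p(3) HH1_D(5)[OF p(1)]] .
  qed
  show "R ` {p\<in>{p\<in>HH1 (Suc (Suc n)). count p (mx p) = 1}. mx p - 1 \<in># p} \<subseteq> HH1 n"
  proof (rule image_subsetI)
    fix p assume "p \<in> {p\<in>{p\<in>HH1 (Suc (Suc n)). count p (mx p) = 1}. mx p - 1 \<in># p}"
    then have p: "p \<in> HH1 (Suc (Suc n))" "count p (mx p) = 1" "mx p - 1 \<in># p" by auto
    note D = HH1_D[OF p(1)]
    have m: "mx (R p) = mx p - 1" using R_mx1[OF p(2) p(3) D(5)] .
    have rne: "R p \<noteq> {#}" using R_ne1[OF p(2) p(3) D(5)] .
    have "rp (R p) = rp p"
    proof (rule rp_eqI)
      fix x show "2 \<le> count (R p) x \<longleftrightarrow> 2 \<le> count p x"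
        using p(2) by (cases "x = mx p") (simp_all add: R_cnt)
    qed
    moreover have "\<forall>x\<in>#R p. 0 < x" by (rule all_R) (use D(2) in auto)
    moreover have "perimeter (R p) = n" using per_eq[OF rne] m R_size[OF D(1)] D(4) D(5) by simp
    ultimately show "R p \<in> HH1 n" using rne D(3) by (intro HH1_I) auto
  qed
qed

lemma HH1_b4: "bij_betw (B 1) {q\<in>HH1 (Suc n). \<not> 2 \<le> count q (mx q)}
   {p\<in>{p\<in>HH1 (Suc (Suc n)). count p (mx p) = 1}. \<not> mx p - 1 \<in># p}"
proof (rule bij_betw_byWitness[where f'="Bi 1"])
  show "\<forall>a\<in>{q\<in>HH1 (Suc n). \<not> 2 \<le> count q (mx q)}. Bi 1 (B 1 a) = a" using HH1_D(1) B_Bi by blast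
  show "B 1 ` {q\<in>HH1 (Suc n). \<not> 2 \<le> count q (mx q)} \<subseteq> {p\<in>{p\<in>HH1 (Suc (Suc n)). count p (mx p) = 1}. \<not> mx p - 1 \<in># p}"
  proof (rule image_subsetI)
    fix q assume "q \<in> {q\<in>HH1 (Suc n). \<not> 2 \<le> count q (mx q)}"
    then have q: "q \<in> HH1 (Suc n)" "\<not> 2 \<le> count q (mx q)" by auto
    note D = HH1_D[OF q(1)]
    have "0 < count q (mx q)" using mx_in[OF D(1)] by simp
    then have c1: "count q (mx q) = 1" using q(2) by linarith
    have "rp (B 1 q) = rp q"
    proof (rule rp_eqI)
      fix x show "2 \<le> count (B 1 q) x \<longleftrightarrow> 2 \<le> count q x"
        using mx_notin[of 1 q] c1 by (cases "x = mx q + 1"; cases "x = mx q") (simp_all add: B_cnt)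
    qed
    moreover have "\<forall>x\<in>#B 1 q. 0 < x" by (rule all_B) (use D(2) in auto)
    moreover have "perimeter (B 1 q) = Suc (Suc n)" using B_per[OF D(1), of 1] per_eq[OF D(1)] D(4) by simp
    ultimately have "B 1 q \<in> HH1 (Suc (Suc n))" using B_ne D(3) by (intro HH1_I) auto
    moreover have "count (B 1 q) (mx (B 1 q)) = 1" using B_count[OF D(1)] by simp
    moreover have "\<not> mx (B 1 q) - 1 \<in># B 1 q"
    proof -
      have "count (B 1 q) (mx q) = 0" using c1 by (simp add: B_cnt)
      then show ?thesis using D(1) by (simp add: B_mx not_in_iff)
    qed
    ultimately show "B 1 q \<in> {p\<in>{p\<in>HH1 (Suc (Suc n)). count p (mx p) = 1}. \<not> mx p - 1 \<in># p}" by simp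
  qed
  have key: "2 \<le> mx p \<and> (\<forall>x\<in># p - {#mx p#}. x \<le> mx p - 1)"
    if p: "p \<in> HH1 (Suc (Suc n))" "count p (mx p) = 1" for p
  proof -
    note D = HH1_D[OF p(1)]
    obtain e where "rp p = {e}" using D(3)[unfolded card1] by blast
    then have e: "2 \<le> count p e" by (auto simp: rp_alt)
    then have "e \<noteq> mx p" using p(2) by auto
    moreover have "e \<in># p" using e by (simp flip: count_greater_zero_iff)
    moreover have "0 < e" using D(2) calculation(2) by blast
    ultimately have "2 \<le> mx p" using mx_ge[of e p] by linarith
    moreover have "x \<le> mx p - 1" if x: "x \<in># p - {#mx p#}" for x
      using rest_lt[OF p(2) x] by simp
    ultimately show ?thesis by blast
  qed
  show "\<forall>a'\<in>{p\<in>{p\<in>HH1 (Suc (Suc n)). count p (mx p) = 1}. \<not> mx p - 1 \<in># p}. B 1 (Bi 1 a') = a'"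
  proof
    fix p assume "p \<in> {p\<in>{p\<in>HH1 (Suc (Suc n)). count p (mx p) = 1}. \<not> mx p - 1 \<in># p}"
    then have p: "p \<in> HH1 (Suc (Suc n))" "count p (mx p) = 1" by auto
    have k: "2 \<le> mx p" "\<And>x. x \<in># p - {#mx p#} \<Longrightarrow> x \<le> mx p - 1" using key[OF p] by auto
    have "1 \<le> mx p" using k(1) by linarith
    then show "B 1 (Bi 1 p) = p" using Bi_B[OF p(2) k(2)] by blast
  qed
  show "Bi 1 ` {p\<in>{p\<in>HH1 (Suc (Suc n)). count p (mx p) = 1}. \<not> mx p - 1 \<in># p} \<subseteq> {q\<in>HH1 (Suc n). \<not> 2 \<le> count q (mx q)}"
  proof (rule image_subsetI)
    fix p assume "p \<in> {p\<in>{p\<in>HH1 (Suc (Suc n)). count p (mx p) = 1}. \<not> mx p - 1 \<in># p}"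
    then have p: "p \<in> HH1 (Suc (Suc n))" "count p (mx p) = 1" "\<not> mx p - 1 \<in># p" by auto
    note D = HH1_D[OF p(1)]
    have k: "2 \<le> mx p" "\<forall>x\<in># p - {#mx p#}. x \<le> mx p - 1" using key[OF p(1,2)] by auto
    have m: "mx (Bi 1 p) = mx p - 1" using Bi_mx[OF p(2)] k(2) by blast
    have z: "count p (mx p - 1) = 0" using p(3) by (simp add: not_in_iff)
    have ne1: "mx p - 1 \<noteq> mx p" using k(1) by simp
    have "rp (Bi 1 p) = rp p"
    proof (rule rp_eqI)
      fix x show "2 \<le> count (Bi 1 p) x \<longleftrightarrow> 2 \<le> count p x"
        using z ne1 p(2) by (cases "x = mx p - 1"; cases "x = mx p") (simp_all add: Bi_cnt)
    qed
    moreover have "\<forall>x\<in>#Bi 1 p. 0 < x" by (rule all_Bi) (use D(2) k(1) in auto)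
    moreover have "perimeter (Bi 1 p) = Suc n" using per_eq[OF Bi_ne] m Bi_size[OF D(1)] D(4) k(1) by simp
    ultimately have "Bi 1 p \<in> HH1 (Suc n)" using Bi_ne D(3) by (intro HH1_I) auto
    moreover have "\<not> 2 \<le> count (Bi 1 p) (mx (Bi 1 p))" using m z ne1 by (simp add: Bi_cnt)
    ultimately show "Bi 1 p \<in> {q\<in>HH1 (Suc n). \<not> 2 \<le> count q (mx q)}" by simp
  qed
qed

lemma HH1_card: "h1 (Suc (Suc n)) = h1 (Suc n) + h1 n + fib (Suc n)"
proof -
  let ?S = "HH1 (Suc (Suc n))"
  let ?T1 = "{p\<in>?S. 2 \<le> count p (mx p)}"
  let ?T2 = "{p\<in>?S. count p (mx p) = 1}"
  have f1: "finite ?T1" by (rule finite_subset[OF _ finite_HH1]) auto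
  have f2: "finite ?T2" by (rule finite_subset[OF _ finite_HH1]) auto
  have "h1 (Suc (Suc n)) = card ?T1 + card ?T2"
    unfolding h1_def by (rule split_card(1)[OF finite_HH1]) (auto simp: HH1_def)
  also have "card ?T1 = card {p\<in>?T1. 3 \<le> count p (mx p)} + card {p\<in>?T1. \<not> 3 \<le> count p (mx p)}"
    by (rule split_P(1)[OF f1])
  also have "card ?T2 = card {p\<in>?T2. mx p - 1 \<in># p} + card {p\<in>?T2. \<not> mx p - 1 \<in># p}"
    by (rule split_P(1)[OF f2])
  also have "card {p\<in>?T1. 3 \<le> count p (mx p)} = card {q\<in>HH1 (Suc n). 2 \<le> count q (mx q)}"
    using bij_betw_same_card[OF HH1_b1[of n]] by simp
  also have "card {p\<in>?T1. \<not> 3 \<le> count p (mx p)} = fib (Suc n)"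
    using bij_betw_same_card[OF HH1_b2[of n]] HH_fib[of "Suc n"] by simp
  also have "card {p\<in>?T2. mx p - 1 \<in># p} = h1 n"
    unfolding h1_def using bij_betw_same_card[OF HH1_b3[of n]] by simp
  also have "card {p\<in>?T2. \<not> mx p - 1 \<in># p} = card {q\<in>HH1 (Suc n). \<not> 2 \<le> count q (mx q)}"
    using bij_betw_same_card[OF HH1_b4[of n]] by simp
  finally have e: "h1 (Suc (Suc n)) = card {q\<in>HH1 (Suc n). 2 \<le> count q (mx q)} + fib (Suc n) +
     (h1 n + card {q\<in>HH1 (Suc n). \<not> 2 \<le> count q (mx q)})" .
  have "card {q\<in>HH1 (Suc n). 2 \<le> count q (mx q)} + card {q\<in>HH1 (Suc n). \<not> 2 \<le> count q (mx q)} = h1 (Suc n)"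
    unfolding h1_def by (rule split_P(1)[OF finite_HH1, symmetric])
  then show ?thesis using e by simp
qed

theorem mainTheorem5:
  fixes M :: nat
  assumes "M \<ge> 2"
  shows "g M = g (M - 1) + g (M - 2) + fib (M - 1) \<and>
         h M = h (M - 1) + h (M - 2) + fib (M - 2) \<and>
         g1 M = g1 (M - 1) + g1 (M - 2) + fib (M - 1) \<and>
         h1 M = h1 (M - 1) + h1 (M - 2) + fib (M - 1)"
proof -
  obtain n where M: "M = Suc (Suc n)" using assms by (metis add_2_eq_Suc le_Suc_ex)
  have "g M = g (M - 1) + g (M - 2) + fib (M - 1)"
    using GG_sum[of n] GG_fib'[of "Suc n"] M by simp
  moreover have "h M = h (M - 1) + h (M - 2) + fib (M - 2)"
    using HH_sum[of n] HH_fib[of n] M by simp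
  moreover have "g1 M = g1 (M - 1) + g1 (M - 2) + fib (M - 1)"
    using GG1_card[of n] M by simp
  moreover have "h1 M = h1 (M - 1) + h1 (M - 2) + fib (M - 1)"
    using HH1_card[of n] M by simp
  ultimately show ?thesis by blast
qed

end
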